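(* Fix $x\in\mathbf{X}$ and let $(k_0,j_0)$ be the unique pair with $x\in\mathbf{X}_{k_0,j_0}$. Suppose OOD detectors satisfy $H_{OOD,k}(x)\le\delta_k$ for $k=1,\dots,T$ and the within-task prediction satisfies $H_{WP}(x)\le\epsilon$. Let the task-id prediction be $\mathbf{P}(x\in\mathbf{X}_k\mid D)=\frac{\mathbf{P}'_k(x\in\mathbf{X}_k\mid D)}{\sum_{k'}\mathbf{P}'_{k'}(x\in\mathbf{X}_{k'}\mid D)}$ and the class-incremental prediction be $\mathbf{P}(x\in\mathbf{X}_{k,j}\mid D)=\mathbf{P}(x\in\mathbf{X}_{k,j}\mid x\in\mathbf{X}_k,D)\,\mathbf{P}(x\in\mathbf{X}_k\mid D)$. Then $$H_{CIL}(x)\le\epsilon+\Big(\sum_k\mathbf{1}_{x\in\mathbf{X}_k}e^{\delta_k}\Big)\Big(\sum_k(1-e^{-\delta_k})\Big),$$ where $\mathbf{1}_{x\in\mathbf{X}_k}$ is the indicator of $x\in\mathbf{X}_k$.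
   Context: $\mathbf{X}$ is an input domain which is the disjoint union of task domains $\mathbf{X}_1,\dots,\mathbf{X}_T$, and each $\mathbf{X}_k$ is the disjoint union of class domains $\mathbf{X}_{k,j}$. $D$ is a fixed conditioning event. A within-task prediction (WP) gives, for each task $k$, a probability distribution $\{\mathbf{P}(x\in\mathbf{X}_{k,j}\mid x\in\mathbf{X}_k,D)\}_j$ over the classes of task $k$; $H_{WP}(x)=-\log\mathbf{P}(x\in\mathbf{X}_{k_0,j_0}\mid x\in\mathbf{X}_{k_0},D)$. $H_{CIL}(x)=-\log\mathbf{P}(x\in\mathbf{X}_{k_0,j_0}\mid D)$. An OOD detector for task $k$ is a value $\mathbf{P}'_k(x\in\mathbf{X}_k\mid D)\in[0,1]$ with $\mathbf{P}'_k(x\in\mathbf{X}\setminus\mathbf{X}_k\mid D)=1-\mathbf{P}'_k(x\in\mathbf{X}_k\mid D)$, and $H_{OOD,k}(x)=-\log\mathbf{P}'_k(x\in\mathbf{X}_k\mid D)$ if $x\in\mathbf{X}_k$, $H_{OOD,k}(x)=-\log\mathbf{P}'_k(x\in\mathbf{X}\setminus\mathbf{X}_k\mid D)$ otherwise. *)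

theory Defs
  imports "HOL-Analysis.Analysis"
begin

definition nlog :: "real \<Rightarrow> ereal" where
  "nlog p = (if p > 0 then ereal (- ln p) else \<infinity>)"

text \<open>H_OOD,k(x): Pood k x is the detector value P'_k(x in X_k | D), Xt k the task domain.\<close>
definition H_OOD :: "(nat \<Rightarrow> 'a set) \<Rightarrow> (nat \<Rightarrow> 'a \<Rightarrow> real) \<Rightarrow> nat \<Rightarrow> 'a \<Rightarrow> ereal" where
  "H_OOD Xt Pood k x = (if x \<in> Xt k then nlog (Pood k x) else nlog (1 - Pood k x))"

definition TP :: "nat \<Rightarrow> (nat \<Rightarrow> 'a \<Rightarrow> real) \<Rightarrow> nat \<Rightarrow> 'a \<Rightarrow> real" where
  "TP T Pood k x = Pood k x / (\<Sum>k'\<in>{1..T}. Pood k' x)"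

text \<open>Class-incremental prediction P(x in X_{k,j} | D); Pwp k j x = P(x in X_{k,j} | x in X_k, D).\<close>
definition CIL :: "nat \<Rightarrow> (nat \<Rightarrow> 'a \<Rightarrow> real) \<Rightarrow> (nat \<Rightarrow> nat \<Rightarrow> 'a \<Rightarrow> real) \<Rightarrow> nat \<Rightarrow> nat \<Rightarrow> 'a \<Rightarrow> real" where
  "CIL T Pood Pwp k j x = Pwp k j x * TP T Pood k x"

end

theory Submission
  imports Defs
begin

theorem theorem3:
  fixes T :: nat and X :: "'a set" and Xt :: "nat \<Rightarrow> 'a set"
    and Xc :: "nat \<Rightarrow> nat \<Rightarrow> 'a set" and J :: "nat \<Rightarrow> nat set"
    and Pood :: "nat \<Rightarrow> 'a \<Rightarrow> real" and Pwp :: "nat \<Rightarrow> nat \<Rightarrow> 'a \<Rightarrow> real"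
    and \<delta> :: "nat \<Rightarrow> real" and \<epsilon> :: real and x :: 'a and k0 j0 :: nat
  assumes X_union: "X = (\<Union>k\<in>{1..T}. Xt k)"
    and Xt_disj: "disjoint_family_on Xt {1..T}"
    and Xt_union: "\<And>k. k \<in> {1..T} \<Longrightarrow> Xt k = (\<Union>j\<in>J k. Xc k j)"
    and Xc_disj: "\<And>k. k \<in> {1..T} \<Longrightarrow> disjoint_family_on (Xc k) (J k)"
    and J_fin: "\<And>k. k \<in> {1..T} \<Longrightarrow> finite (J k)"
    and WP_nonneg: "\<And>k j. k \<in> {1..T} \<Longrightarrow> j \<in> J k \<Longrightarrow> 0 \<le> Pwp k j x"
    and WP_sum: "\<And>k. k \<in> {1..T} \<Longrightarrow> (\<Sum>j\<in>J k. Pwp k j x) = 1"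
    and OOD_range: "\<And>k. k \<in> {1..T} \<Longrightarrow> 0 \<le> Pood k x \<and> Pood k x \<le> 1"
    and x_in: "x \<in> X"
    and k0: "k0 \<in> {1..T}" and j0: "j0 \<in> J k0" and x_k0j0: "x \<in> Xc k0 j0"
    and OOD_bound: "\<And>k. k \<in> {1..T} \<Longrightarrow> H_OOD Xt Pood k x \<le> ereal (\<delta> k)"
    and WP_bound: "nlog (Pwp k0 j0 x) \<le> ereal \<epsilon>"
  shows "nlog (CIL T Pood Pwp k0 j0 x)
    \<le> ereal (\<epsilon> + (\<Sum>k\<in>{1..T}. indicator (Xt k) x * exp (\<delta> k))
                   * (\<Sum>k\<in>{1..T}. 1 - exp (- \<delta> k)))"
proof -
  let ?p = "\<lambda>k. Pood k x"
  let ?S = "\<Sum>k\<in>{1..T}. ?p k"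
  let ?w = "Pwp k0 j0 x"
  have xk0: "x \<in> Xt k0" using Xt_union[OF k0] j0 x_k0j0 by blast
  have notk: "x \<notin> Xt k" if "k \<in> {1..T}" "k \<noteq> k0" for k
    using Xt_disj xk0 that k0 unfolding disjoint_family_on_def by blast
  have ind: "(\<Sum>k\<in>{1..T}. indicator (Xt k) x * exp (\<delta> k)) = exp (\<delta> k0)"
  proof -
    have "(\<Sum>k\<in>{1..T}. indicator (Xt k) x * exp (\<delta> k)) = (\<Sum>k\<in>{1..T}. if k = k0 then exp (\<delta> k) else 0)"
      by (rule sum.cong) (auto simp: xk0 notk)
    also have "\<dots> = exp (\<delta> k0)" using k0 by simp
    finally show ?thesis .
  qed
  have dpos: "0 \<le> \<delta> k" if k: "k \<in> {1..T}" for k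
  proof -
    have r: "0 \<le> ?p k" "?p k \<le> 1" using OOD_range[OF k] by auto
    have H: "H_OOD Xt Pood k x \<le> ereal (\<delta> k)" using OOD_bound[OF k] .
    show ?thesis
    proof (cases "x \<in> Xt k")
      case True
      then have "nlog (?p k) \<le> ereal (\<delta> k)" using H by (simp add: H_OOD_def)
      then have "?p k > 0" "- ln (?p k) \<le> \<delta> k" by (auto simp: nlog_def split: if_splits)
      moreover have "ln (?p k) \<le> 0" using r \<open>?p k > 0\<close> by simp
      ultimately show ?thesis by linarith
    next
      case False
      then have "nlog (1 - ?p k) \<le> ereal (\<delta> k)" using H by (simp add: H_OOD_def)
      then have "1 - ?p k > 0" "- ln (1 - ?p k) \<le> \<delta> k" by (auto simp: nlog_def split: if_splits)
      moreover have "ln (1 - ?p k) \<le> 0" using r \<open>1 - ?p k > 0\<close> by simp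
      ultimately show ?thesis by linarith
    qed
  qed
  have p0: "?p k0 > 0" "- ln (?p k0) \<le> \<delta> k0"
    using OOD_bound[OF k0] xk0 by (auto simp: H_OOD_def nlog_def split: if_splits)
  have p0e: "1 / ?p k0 \<le> exp (\<delta> k0)"
  proof -
    have "exp (- \<delta> k0) \<le> ?p k0" using p0
      by (metis exp_ln exp_le_cancel_iff minus_le_iff)
    then have "1 / ?p k0 \<le> 1 / exp (- \<delta> k0)" using p0(1)
      by (simp add: frac_le)
    then show ?thesis by (simp add: exp_minus divide_inverse)
  qed
  have pk: "?p k \<le> 1 - exp (- \<delta> k)" if k: "k \<in> {1..T}" "k \<noteq> k0" for k
  proof -
    have "nlog (1 - ?p k) \<le> ereal (\<delta> k)" using OOD_bound[OF k(1)] notk[OF k] by (simp add: H_OOD_def)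
    then have a: "1 - ?p k > 0" "- ln (1 - ?p k) \<le> \<delta> k" by (auto simp: nlog_def split: if_splits)
    then have "exp (- \<delta> k) \<le> 1 - ?p k"
      by (metis exp_ln exp_le_cancel_iff minus_le_iff)
    then show ?thesis by linarith
  qed
  have w: "?w > 0" "- ln ?w \<le> \<epsilon>" using WP_bound by (auto simp: nlog_def split: if_splits)
  have fin: "finite {1..T}" by simp
  have Ssplit: "?S = ?p k0 + (\<Sum>k\<in>{1..T} - {k0}. ?p k)"
    using sum.remove[OF fin k0] by simp
  have Rbound: "(\<Sum>k\<in>{1..T} - {k0}. ?p k) \<le> (\<Sum>k\<in>{1..T}. 1 - exp (- \<delta> k))"
  proof -
    have "(\<Sum>k\<in>{1..T} - {k0}. ?p k) \<le> (\<Sum>k\<in>{1..T} - {k0}. 1 - exp (- \<delta> k))"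
      by (rule sum_mono) (use pk in auto)
    also have "\<dots> \<le> (\<Sum>k\<in>{1..T}. 1 - exp (- \<delta> k))"
      using sum.remove[OF fin k0, of "\<lambda>k. 1 - exp (- \<delta> k)"] dpos[OF k0] by simp
    finally show ?thesis .
  qed
  have Rnn: "0 \<le> (\<Sum>k\<in>{1..T} - {k0}. ?p k)"
    by (rule sum_nonneg) (use OOD_range in auto)
  have Spos: "?S > 0" using Ssplit Rnn p0 by linarith
  have cil: "CIL T Pood Pwp k0 j0 x = ?w * (?p k0 / ?S)" by (simp add: CIL_def TP_def)
  have cpos: "?w * (?p k0 / ?S) > 0" using w p0 Spos by simp
  have lnS: "ln (?S / ?p k0) \<le> ?S / ?p k0 - 1"
    using ln_le_minus_one Spos p0 by simp
  have "?S / ?p k0 - 1 = (\<Sum>k\<in>{1..T} - {k0}. ?p k) * (1 / ?p k0)"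
    using Ssplit p0 by (simp add: field_simps)
  also have "\<dots> \<le> (\<Sum>k\<in>{1..T}. 1 - exp (- \<delta> k)) * exp (\<delta> k0)"
    by (rule mult_mono) (use Rbound p0e Rnn p0 in auto)
  finally have key: "ln (?S / ?p k0) \<le> exp (\<delta> k0) * (\<Sum>k\<in>{1..T}. 1 - exp (- \<delta> k))"
    using lnS by (simp add: mult.commute)
  have "- ln (?w * (?p k0 / ?S)) = - ln ?w + ln (?S / ?p k0)"
    using w p0 Spos by (simp add: ln_mult ln_div)
  also have "\<dots> \<le> \<epsilon> + exp (\<delta> k0) * (\<Sum>k\<in>{1..T}. 1 - exp (- \<delta> k))"
    using w key by linarith
  finally show ?thesis using cil cpos ind by (simp add: nlog_def)
qed

end
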